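(* There exist absolute constants $c,c'>0$ such that the following holds. Let $G=(V,E)$ be an unweighted undirected graph, let $\ell\ge1$ be an integer, let $V=A_0\supseteq A_1\supseteq\cdots\supseteq A_{\ell-1}\supseteq A_\ell=\emptyset$ be arbitrary nested vertex sets, and let $H$ (with weights $\omega'$) be the Thorup–Zwick edge set defined in the context. Let $0<\epsilon<1/6$ with $1/\epsilon$ an integer. Then for every $i\in\{0,1,\dots,\ell-1\}$ and every pair $x,y\in V$ with $d_G(x,y)\le(1/\epsilon)^i$, at least one of the following holds: (1) (successful) $d_H(x,y)\le d_G(x,y)+c\cdot i\cdot(1/\epsilon)^{i-1}$; (2) (failing) $d_G(x,A_{i+1})\le c'\cdot(1/\epsilon)^i$. In particular, for $i=\ell-1$ (where $d_G(x,A_\ell)=\infty$) alternative (1) always holds.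
   Context: Thorup–Zwick construction: given nested sets $V=A_0\supseteq A_1\supseteq\cdots\supseteq A_\ell=\emptyset$, write $d_G(v,S)=\min_{s\in S}d_G(v,s)$ with $d_G(v,\emptyset)=\infty$. For $v\in V$ and $j$ with $A_j\neq\emptyset$, the pivot $p_j(v)$ is a vertex of $A_j$ closest to $v$ (ties broken consistently). For $0\le i\le\ell-1$ and $u\in A_i\setminus A_{i+1}$, the bunch is $B(u)=\{v\in A_i: d_G(u,v)<d_G(u,A_{i+1})\}\cup\{p_{i+1}(u)\}$ (the pivot term omitted if $A_{i+1}=\emptyset$; thus $B(u)=A_{\ell-1}$ for $u\in A_{\ell-1}$). The edge set is $H=\{(u,v):u\in V, v\in B(u)\}\cup\{(v,p_j(v)): v\in V,\ 1\le j\le \ell-1,\ A_j\neq\emptyset\}$, each edge $(u,v)$ having weight $\omega'(u,v)=d_G(u,v)$. $d_H$ denotes shortest-path distance in the weighted graph $(V,H,\omega')$. *)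

theory Defs
  imports Complex_Main "HOL-Library.Extended_Real"
begin

text \<open>Unweighted undirected graph: vertex set V :: nat set, edge relation E (symmetric, E \<subseteq> V \<times> V).
A walk is a nonempty list of vertices of V with consecutive vertices adjacent.\<close>

definition walk :: "nat set \<Rightarrow> (nat \<times> nat) set \<Rightarrow> nat list \<Rightarrow> bool" where
  "walk V E xs \<longleftrightarrow> xs \<noteq> [] \<and> set xs \<subseteq> V \<and>
     (\<forall>k. Suc k < length xs \<longrightarrow> (xs ! k, xs ! Suc k) \<in> E)"

definition gdist :: "nat set \<Rightarrow> (nat \<times> nat) set \<Rightarrow> nat \<Rightarrow> nat \<Rightarrow> enat" where
  "gdist V E u v = Inf {enat (length xs - 1) | xs. walk V E xs \<and> hd xs = u \<and> last xs = v}"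

definition setdist :: "nat set \<Rightarrow> (nat \<times> nat) set \<Rightarrow> nat \<Rightarrow> nat set \<Rightarrow> enat" where
  "setdist V E v S = (INF s\<in>S. gdist V E v s)"

definition is_pivot :: "nat set \<Rightarrow> (nat \<times> nat) set \<Rightarrow> (nat \<Rightarrow> nat set) \<Rightarrow> nat \<Rightarrow> (nat \<Rightarrow> nat \<Rightarrow> nat) \<Rightarrow> bool" where
  "is_pivot V E A l p \<longleftrightarrow> (\<forall>v\<in>V. \<forall>j\<le>l. A j \<noteq> {} \<longrightarrow>
      p j v \<in> A j \<and> gdist V E v (p j v) = setdist V E v (A j))"

text \<open>Bunch of u at level i (used for u \<in> A i - A (i+1)).\<close>
definition bunch :: "nat set \<Rightarrow> (nat \<times> nat) set \<Rightarrow> (nat \<Rightarrow> nat set) \<Rightarrow> (nat \<Rightarrow> nat \<Rightarrow> nat) \<Rightarrow> nat \<Rightarrow> nat \<Rightarrow> nat set" where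
  "bunch V E A p i u = {v \<in> A i. gdist V E u v < setdist V E u (A (Suc i))}
      \<union> (if A (Suc i) = {} then {} else {p (Suc i) u})"

definition TZ_edges :: "nat set \<Rightarrow> (nat \<times> nat) set \<Rightarrow> (nat \<Rightarrow> nat set) \<Rightarrow> nat \<Rightarrow> (nat \<Rightarrow> nat \<Rightarrow> nat) \<Rightarrow> (nat \<times> nat) set" where
  "TZ_edges V E A l p =
     {(u, v). \<exists>i<l. u \<in> A i - A (Suc i) \<and> v \<in> bunch V E A p i u}
     \<union> {(v, p j v) | v j. v \<in> V \<and> 1 \<le> j \<and> j \<le> l - 1 \<and> A j \<noteq> {}}"

definition wdist :: "(nat \<times> nat) set \<Rightarrow> (nat \<Rightarrow> nat \<Rightarrow> enat) \<Rightarrow> nat \<Rightarrow> nat \<Rightarrow> enat" where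
  "wdist H w u v = Inf {(\<Sum>k<length xs - 1. w (xs ! k) (xs ! Suc k)) | xs.
      xs \<noteq> [] \<and> hd xs = u \<and> last xs = v \<and>
      (\<forall>k. Suc k < length xs \<longrightarrow> (xs ! k, xs ! Suc k) \<in> H \<union> H\<inverse>)}"

end

theory Submission
  imports Defs
begin


fun wk :: "nat set \<Rightarrow> (nat \<times> nat) set \<Rightarrow> nat list \<Rightarrow> bool" where
  "wk V E [] = False"
| "wk V E [x] = (x \<in> V)"
| "wk V E (x # y # zs) = (x \<in> V \<and> (x, y) \<in> E \<and> wk V E (y # zs))"

lemma walk_wk: "walk V E xs \<longleftrightarrow> wk V E xs"
proof (induction V E xs rule: wk.induct)
  case (3 V E x y zs)
  have "walk V E (x # y # zs) \<longleftrightarrow> x \<in> V \<and> (x, y) \<in> E \<and> walk V E (y # zs)"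
    unfolding walk_def
  proof safe
    fix k assume "\<forall>k. Suc k < length (x # y # zs) \<longrightarrow> ((x # y # zs) ! k, (x # y # zs) ! Suc k) \<in> E"
      "Suc k < length (y # zs)"
    then show "((y # zs) ! k, (y # zs) ! Suc k) \<in> E"
      by (metis Suc_less_eq length_Cons nth_Cons_Suc)
  next
    fix k assume a: "(x, y) \<in> E" "\<forall>k. Suc k < length (y # zs) \<longrightarrow> ((y # zs) ! k, (y # zs) ! Suc k) \<in> E"
      "Suc k < length (x # y # zs)"
    then show "((x # y # zs) ! k, (x # y # zs) ! Suc k) \<in> E"
      by (cases k) auto
  qed auto
  then show ?case using 3 by simp
qed (auto simp: walk_def)

lemma wk_ne: "wk V E xs \<Longrightarrow> xs \<noteq> []" by (cases xs) auto

lemma wk_append: "wk V E xs \<Longrightarrow> wk V E ys \<Longrightarrow> last xs = hd ys \<Longrightarrow> wk V E (xs @ tl ys)"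
proof (induction V E xs rule: wk.induct)
  case (2 V E x)
  then show ?case using wk_ne[of V E ys] by (cases ys) auto
next
  case (3 V E x y zs)
  then show ?case by (cases zs) auto
qed auto

lemma wk_rev: "sym E \<Longrightarrow> wk V E xs \<Longrightarrow> wk V E (rev xs)"
proof (induction V E xs rule: wk.induct)
  case (3 V E x y zs)
  have r: "wk V E (rev (y # zs))" using 3 by simp
  have "y \<in> V" using 3 by (cases zs) auto
  then have "wk V E [y, x]" using 3 by (auto dest: symD)
  moreover have "last (rev (y # zs)) = hd [y, x]" by simp
  ultimately have "wk V E (rev (y # zs) @ tl [y, x])" using wk_append r by blast
  then show ?case by simp
qed auto

lemma gdist_le: "walk V E xs \<Longrightarrow> hd xs = u \<Longrightarrow> last xs = v \<Longrightarrow> gdist V E u v \<le> enat (length xs - 1)"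
  unfolding gdist_def by (rule Inf_lower) blast

lemma gdist_attain: assumes "gdist V E u v \<noteq> \<infinity>"
  shows "\<exists>xs. walk V E xs \<and> hd xs = u \<and> last xs = v \<and> gdist V E u v = enat (length xs - 1)"
proof -
  let ?S = "{enat (length xs - 1) | xs. walk V E xs \<and> hd xs = u \<and> last xs = v}"
  have ne: "?S \<noteq> {}"
  proof
    assume e: "?S = {}"
    have "gdist V E u v = Inf ?S" by (simp only: gdist_def)
    also have "\<dots> = \<infinity>" by (simp only: e Inf_empty top_enat_def)
    finally show False using assms by simp
  qed
  then obtain z where "z \<in> ?S" by blast
  then have "(LEAST x. x \<in> ?S) \<in> ?S" by (rule LeastI)
  moreover have "Inf ?S = (LEAST x. x \<in> ?S)" using ne unfolding Inf_enat_def by (simp only: if_False)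
  ultimately have "Inf ?S \<in> ?S" by simp
  then show ?thesis unfolding gdist_def by auto
qed

lemma gdist_refl: "u \<in> V \<Longrightarrow> gdist V E u u = 0"
  using gdist_le[of V E "[u]" u u] by (simp add: walk_def zero_enat_def[symmetric])

lemma gdist_edge: "(u, v) \<in> E \<Longrightarrow> E \<subseteq> V \<times> V \<Longrightarrow> gdist V E u v \<le> 1"
  using gdist_le[of V E "[u,v]" u v] by (auto simp: walk_wk one_enat_def)

lemma gdist_tri: "gdist V E u w \<le> gdist V E u v + gdist V E v w"
proof (cases "gdist V E u v = \<infinity> \<or> gdist V E v w = \<infinity>")
  case False
  then obtain xs ys where x: "walk V E xs" "hd xs = u" "last xs = v" "gdist V E u v = enat (length xs - 1)"
    and y: "walk V E ys" "hd ys = v" "last ys = w" "gdist V E v w = enat (length ys - 1)"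
    using gdist_attain by meson
  have ne: "xs \<noteq> []" "ys \<noteq> []" using x y by (auto simp: walk_def)
  have "walk V E (xs @ tl ys)" using x y wk_append by (simp add: walk_wk)
  moreover have "hd (xs @ tl ys) = u" using x ne by simp
  moreover have "last (xs @ tl ys) = w" using x y ne
    by (cases ys) (auto simp: last_append)
  ultimately have g: "gdist V E u w \<le> enat (length (xs @ tl ys) - 1)" by (rule gdist_le)
  have "length (xs @ tl ys) - 1 = (length xs - 1) + (length ys - 1)" using ne
    by (cases xs; cases ys) simp_all
  then have "enat (length (xs @ tl ys) - 1) = gdist V E u v + gdist V E v w" using x(4) y(4) by simp
  then show ?thesis using g by simp
qed auto

lemma gdist_sym_le: "sym E \<Longrightarrow> gdist V E u v \<le> gdist V E v u"
proof (cases "gdist V E v u = \<infinity>")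
  case False
  assume s: "sym E"
  then obtain xs where x: "walk V E xs" "hd xs = v" "last xs = u" "gdist V E v u = enat (length xs - 1)"
    using gdist_attain False by meson
  have ne: "xs \<noteq> []" using x by (auto simp: walk_def)
  have "walk V E (rev xs)" using x s wk_rev by (simp add: walk_wk)
  then have "gdist V E u v \<le> enat (length (rev xs) - 1)" by (rule gdist_le) (use x ne in \<open>auto simp: hd_rev last_rev\<close>)
  then show ?thesis using x by simp
qed auto

lemma gdist_sym: "sym E \<Longrightarrow> gdist V E u v = gdist V E v u"
  using gdist_sym_le by (metis antisym)

lemma setdist_le: "s \<in> S \<Longrightarrow> setdist V E v S \<le> gdist V E v s"
  unfolding setdist_def by (rule INF_lower)

inductive hp :: "(nat \<times> nat) set \<Rightarrow> (nat \<Rightarrow> nat \<Rightarrow> enat) \<Rightarrow> nat \<Rightarrow> nat \<Rightarrow> enat \<Rightarrow> bool"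
  for H w where
  hp_refl: "hp H w u u 0"
| hp_step: "(u, v) \<in> H \<union> H\<inverse> \<Longrightarrow> hp H w v z c \<Longrightarrow> hp H w u z (w u v + c)"

lemma hp_list: "hp H w u v c \<Longrightarrow> \<exists>xs. xs \<noteq> [] \<and> hd xs = u \<and> last xs = v \<and>
      (\<forall>k. Suc k < length xs \<longrightarrow> (xs ! k, xs ! Suc k) \<in> H \<union> H\<inverse>) \<and>
      (\<Sum>k<length xs - 1. w (xs ! k) (xs ! Suc k)) = c"
proof (induction rule: hp.induct)
  case (hp_refl u)
  then show ?case by (intro exI[of _ "[u]"]) auto
next
  case (hp_step u v z c)
  then obtain xs where x: "xs \<noteq> []" "hd xs = v" "last xs = z"
    "\<forall>k. Suc k < length xs \<longrightarrow> (xs ! k, xs ! Suc k) \<in> H \<union> H\<inverse>"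
    "(\<Sum>k<length xs - 1. w (xs ! k) (xs ! Suc k)) = c" by blast
  have "\<forall>k. Suc k < length (u # xs) \<longrightarrow> ((u # xs) ! k, (u # xs) ! Suc k) \<in> H \<union> H\<inverse>"
  proof (intro allI impI)
    fix k assume "Suc k < length (u # xs)"
    then show "((u # xs) ! k, (u # xs) ! Suc k) \<in> H \<union> H\<inverse>"
      using x hp_step(1) by (cases k) (auto simp: hd_conv_nth)
  qed
  moreover have "(\<Sum>k<length (u # xs) - 1. w ((u # xs) ! k) ((u # xs) ! Suc k)) = w u v + c"
  proof -
    have l: "length (u # xs) - 1 = Suc (length xs - 1)" using x by (cases xs) auto
    show ?thesis unfolding l sum.lessThan_Suc_shift using x by (simp add: hd_conv_nth)
  qed
  ultimately show ?case using x by (intro exI[of _ "u # xs"]) auto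
qed

lemma hp_wdist: "hp H w u v c \<Longrightarrow> wdist H w u v \<le> c"
  unfolding wdist_def by (rule Inf_lower) (use hp_list in blast)

lemma hp_trans: "hp H w u v c1 \<Longrightarrow> hp H w v z c2 \<Longrightarrow> hp H w u z (c1 + c2)"
  by (induction rule: hp.induct) (auto simp: add.assoc intro: hp.intros)

lemma hp_edge: "(u, v) \<in> H \<union> H\<inverse> \<Longrightarrow> hp H w u v (w u v)"
  using hp_step[OF _ hp_refl] by fastforce

lemma hp_rev: assumes "\<And>a b. w a b = w b a" shows "hp H w u v c \<Longrightarrow> hp H w v u c"
proof (induction rule: hp.induct)
  case (hp_refl u) then show ?case by (rule hp.hp_refl)
next
  case (hp_step u v z c)
  have "hp H w v u (w v u)" using hp_step(1) by (intro hp_edge) auto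
  from hp_trans[OF hp_step(3) this] show ?case using assms by (simp add: add.commute)
qed



context
  fixes V :: "nat set" and E :: "(nat \<times> nat) set" and l :: nat and A :: "nat \<Rightarrow> nat set"
    and p :: "nat \<Rightarrow> nat \<Rightarrow> nat" and D :: nat
  assumes EV: "E \<subseteq> V \<times> V" and sE: "sym E" and A0: "A 0 = V"
    and Amono: "\<forall>j<l. A (Suc j) \<subseteq> A j" and piv: "is_pivot V E A l p" and D7: "D \<ge> 7"
begin

lemma A_sub: "j \<le> l \<Longrightarrow> A j \<subseteq> V"
proof (induction j)
  case 0 then show ?case using A0 by simp
next
  case (Suc j) then show ?case using Amono by (metis Suc_le_lessD Suc_leD order_trans)
qed

lemma setdist_empty: "setdist V E v {} = \<infinity>"
  unfolding setdist_def by (simp add: top_enat_def)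

lemma pivot_near: assumes "v \<in> V" "j \<le> l" "setdist V E v (A j) \<le> enat m"
  shows "A j \<noteq> {} \<and> p j v \<in> A j \<and> gdist V E v (p j v) \<le> enat m"
proof -
  have ne: "A j \<noteq> {}" using assms(3) setdist_empty by auto
  then show ?thesis using piv assms unfolding is_pivot_def by auto
qed

lemma pivot_edge: "v \<in> V \<Longrightarrow> 1 \<le> j \<Longrightarrow> j \<le> l - 1 \<Longrightarrow> A j \<noteq> {} \<Longrightarrow> (v, p j v) \<in> TZ_edges V E A l p"
  unfolding TZ_edges_def by blast

lemma bunch_edge: "i < l \<Longrightarrow> u \<in> A i \<Longrightarrow> u \<notin> A (Suc i) \<Longrightarrow> v \<in> A i \<Longrightarrow>
   gdist V E u v < setdist V E u (A (Suc i)) \<Longrightarrow> (u, v) \<in> TZ_edges V E A l p"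
  unfolding TZ_edges_def bunch_def by blast

lemma hp_sym: "hp H (gdist V E) u v c \<Longrightarrow> hp H (gdist V E) v u c"
  by (rule hp_rev) (use gdist_sym[OF sE] in auto)

lemma gdist_fin_walk: assumes "gdist V E x y = enat n"
  shows "\<exists>xs. walk V E xs \<and> hd xs = x \<and> last xs = y \<and> n = length xs - 1"
  using gdist_attain[of V E x y] assms by auto

abbreviation "HH \<equiv> TZ_edges V E A l p"
abbreviation "dd \<equiv> gdist V E"

lemma base: assumes "0 < l" "x \<in> V" "y \<in> V" "dd x y \<le> enat 1"
  shows "(\<exists>c. hp HH dd x y c \<and> c \<le> dd x y) \<or> setdist V E x (A 1) \<le> enat 4"
proof (cases "x = y")
  case True
  then show ?thesis using hp_refl by fastforce
next
  case False
  obtain n where n: "dd x y = enat n" "n \<le> 1" using assms(4) by (cases "dd x y") auto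
  then obtain xs where xs: "walk V E xs" "hd xs = x" "last xs = y" "n = length xs - 1"
    using gdist_fin_walk by blast
  have ne: "xs \<noteq> []" using xs by (auto simp: walk_def)
  have "length xs \<noteq> 1" using False xs ne by (cases xs) auto
  moreover have "length xs \<ge> 1" using ne by (cases xs) auto
  ultimately have l2: "length xs = 2" using n xs by arith
  have "(xs ! 0, xs ! Suc 0) \<in> E" using xs(1) l2 unfolding walk_def by auto
  moreover have "xs ! 0 = x" using xs ne by (simp add: hd_conv_nth)
  moreover have "xs ! Suc 0 = y" using xs ne l2 by (simp add: last_conv_nth)
  ultimately have xyE: "(x, y) \<in> E" by simp
  show ?thesis
  proof (rule disjCI)
    assume far: "\<not> setdist V E x (A 1) \<le> enat 4"
    have "x \<notin> A 1"
    proof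
      assume "x \<in> A 1"
      then have "setdist V E x (A 1) \<le> dd x x" by (rule setdist_le)
      then have "setdist V E x (A 1) \<le> enat 0" using gdist_refl[OF assms(2), of E] by (simp add: zero_enat_def)
      then have "setdist V E x (A 1) \<le> enat 4" by (rule order_trans) simp
      then show False using far by simp
    qed
    note xA1 = this
    have dlt: "dd x y < setdist V E x (A 1)"
    proof -
      have f: "enat 4 < setdist V E x (A 1)" using far by (simp add: not_le)
      have "dd x y < enat 4" using assms(4) by (rule le_less_trans) simp
      then show ?thesis using f by (rule less_trans)
    qed
    have "(x, y) \<in> HH"
      by (rule bunch_edge[of 0 x y]) (use assms A0 xA1 dlt in auto)
    then show "\<exists>c. hp HH dd x y c \<and> c \<le> dd x y" using hp_edge by blast
  qed
qed

lemma step: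
  assumes il: "Suc i < l"
    and IH: "\<And>x y. x \<in> V \<Longrightarrow> y \<in> V \<Longrightarrow> dd x y \<le> enat (D^i) \<Longrightarrow>
       (\<exists>c. hp HH dd x y c \<and> c \<le> dd x y + enat (16*i*D^(i-1))) \<or> setdist V E x (A (Suc i)) \<le> enat (4*D^i)"
    and xV: "x \<in> V" and yV: "y \<in> V" and dxy: "dd x y \<le> enat (D * D^i)"
  shows "(\<exists>c. hp HH dd x y c \<and> c \<le> dd x y + enat (16*Suc i*D^i)) \<or> setdist V E x (A (Suc (Suc i))) \<le> enat (4*(D*D^i))"
proof (rule disjCI)
  define L where "L = D^i"
  define e where "e = 16*i*D^(i-1)"
  assume nf: "\<not> setdist V E x (A (Suc (Suc i))) \<le> enat (4*(D*D^i))"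
  obtain n where n: "dd x y = enat n" "n \<le> D * L" using dxy unfolding L_def by (cases "dd x y") auto
  then obtain xs where xs: "walk V E xs" "hd xs = x" "last xs = y" "n = length xs - 1"
    using gdist_fin_walk by blast
  have ne: "xs \<noteq> []" using xs by (auto simp: walk_def)
  define g where "g j = xs ! j" for j
  have gV: "j \<le> n \<Longrightarrow> g j \<in> V" for j using xs ne unfolding g_def walk_def
    by (metis One_nat_def Suc_pred le_imp_less_Suc length_greater_0_conv nth_mem subsetD)
  have g0: "g 0 = x" using xs ne by (simp add: g_def hd_conv_nth)
  have gn: "g n = y" using xs ne by (simp add: g_def last_conv_nth)
  have gstep: "j < n \<Longrightarrow> dd (g j) (g (Suc j)) \<le> 1" for j
    using xs EV unfolding g_def walk_def by (intro gdist_edge) auto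
  have gpos: "j \<le> k \<Longrightarrow> k \<le> n \<Longrightarrow> dd (g j) (g k) \<le> enat (k - j)" for j k
  proof (induction k)
    case 0 then show ?case using gdist_refl gV by (simp add: zero_enat_def[symmetric])
  next
    case (Suc k)
    show ?case
    proof (cases "j = Suc k")
      case True then show ?thesis using gdist_refl gV Suc by (simp add: zero_enat_def[symmetric])
    next
      case False
      then have "j \<le> k" using Suc by simp
      have "dd (g j) (g (Suc k)) \<le> dd (g j) (g k) + dd (g k) (g (Suc k))" by (rule gdist_tri)
      also have "\<dots> \<le> enat (k - j) + 1" using Suc \<open>j \<le> k\<close> gstep[of k] by (intro add_mono) auto
      also have "\<dots> = enat (Suc k - j)" using \<open>j \<le> k\<close> by (simp add: one_enat_def Suc_diff_le)
      finally show ?thesis .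
    qed
  qed
  define q where "q k = min (k*L) n" for k
  define s where "s k = g (q k)" for k
  have qmono: "k \<le> k' \<Longrightarrow> q k \<le> q k'" for k k' unfolding q_def
    by (simp add: min.coboundedI1 mult_le_mono1)
  have q0: "q 0 = 0" unfolding q_def by simp
  have qD: "q D = n" unfolding q_def using n by (simp add: mult.commute)
  have qn: "q k \<le> n" for k unfolding q_def by simp
  have qstep: "q (Suc k) - q k \<le> L" for k unfolding q_def by auto
  have sV: "s k \<in> V" for k unfolding s_def using gV qn by blast
  have s0: "s 0 = x" unfolding s_def using q0 g0 by simp
  have sD: "s D = y" unfolding s_def using qD gn by simp
  have spos: "j \<le> k \<Longrightarrow> dd (s j) (s k) \<le> enat (q k - q j)" for j k
    unfolding s_def using gpos qmono qn by blast
  have De: "D * e \<le> 16 * i * L"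
  proof (cases i)
    case 0 then show ?thesis by (simp add: e_def)
  next
    case (Suc i')
    have "D * e = 16 * i * (D * D^i')" unfolding e_def Suc by simp
    also have "\<dots> = 16 * i * L" unfolding L_def Suc by simp
    finally show ?thesis by simp
  qed
  define good where "good k \<longleftrightarrow> (\<exists>c. hp HH dd (s k) (s (Suc k)) c \<and> c \<le> enat (q (Suc k) - q k) + enat e)" for k
  have ds: "dd (s k) (s (Suc k)) \<le> enat (q (Suc k) - q k)" for k using spos by simp
  have dsL: "dd (s k) (s (Suc k)) \<le> enat (D^i)" for k
    using ds[of k] qstep[of k] unfolding L_def by (meson enat_ord_simps(1) order_trans)
  have bad: "\<not> good k \<Longrightarrow> setdist V E (s k) (A (Suc i)) \<le> enat (4*L) \<and> setdist V E (s (Suc k)) (A (Suc i)) \<le> enat (4*L)" for k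
  proof
    assume ng: "\<not> good k"
    show "setdist V E (s k) (A (Suc i)) \<le> enat (4*L)"
    proof -
      have "\<not> (\<exists>c. hp HH dd (s k) (s (Suc k)) c \<and> c \<le> dd (s k) (s (Suc k)) + enat e)"
      proof
        assume "\<exists>c. hp HH dd (s k) (s (Suc k)) c \<and> c \<le> dd (s k) (s (Suc k)) + enat e"
        then obtain c where "hp HH dd (s k) (s (Suc k)) c" "c \<le> dd (s k) (s (Suc k)) + enat e" by blast
        moreover have "dd (s k) (s (Suc k)) + enat e \<le> enat (q (Suc k) - q k) + enat e" using ds by (rule add_right_mono)
        ultimately show False using ng unfolding good_def by (meson order_trans)
      qed
      then show ?thesis using IH[OF sV sV dsL] unfolding e_def L_def by blast
    qed
    show "setdist V E (s (Suc k)) (A (Suc i)) \<le> enat (4*L)"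
    proof -
      have dsym: "dd (s (Suc k)) (s k) = dd (s k) (s (Suc k))" using gdist_sym[OF sE] by blast
      have "\<not> (\<exists>c. hp HH dd (s (Suc k)) (s k) c \<and> c \<le> dd (s (Suc k)) (s k) + enat e)"
      proof
        assume "\<exists>c. hp HH dd (s (Suc k)) (s k) c \<and> c \<le> dd (s (Suc k)) (s k) + enat e"
        then obtain c where "hp HH dd (s (Suc k)) (s k) c" "c \<le> dd (s k) (s (Suc k)) + enat e" using dsym by auto
        moreover have "dd (s k) (s (Suc k)) + enat e \<le> enat (q (Suc k) - q k) + enat e" using ds by (rule add_right_mono)
        ultimately show False using ng hp_sym unfolding good_def by (meson order_trans)
      qed
      then show ?thesis using IH[OF sV sV, of "Suc k" k] dsL[of k] dsym unfolding e_def L_def by auto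
    qed
  qed
  have chain: "j \<le> k \<Longrightarrow> (\<forall>t. j \<le> t \<and> t < k \<longrightarrow> good t) \<Longrightarrow>
      \<exists>c. hp HH dd (s j) (s k) c \<and> c \<le> enat (q k - q j) + enat ((k - j)*e)" for j k
  proof (induction k)
    case 0 then show ?case using hp_refl by fastforce
  next
    case (Suc k)
    show ?case
    proof (cases "j = Suc k")
      case True then show ?thesis using hp_refl by fastforce
    next
      case False
      then have jk: "j \<le> k" using Suc by simp
      obtain c1 where c1: "hp HH dd (s j) (s k) c1" "c1 \<le> enat (q k - q j) + enat ((k - j)*e)"
        using Suc jk by auto
      obtain c2 where c2: "hp HH dd (s k) (s (Suc k)) c2" "c2 \<le> enat (q (Suc k) - q k) + enat e"
        using Suc jk unfolding good_def by auto
      have "hp HH dd (s j) (s (Suc k)) (c1 + c2)" using c1 c2 hp_trans by blast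
      moreover have "c1 + c2 \<le> (enat (q k - q j) + enat ((k - j)*e)) + (enat (q (Suc k) - q k) + enat e)"
        using c1 c2 by (intro add_mono) auto
      moreover have "\<dots> = enat (q (Suc k) - q j) + enat ((Suc k - j)*e)"
      proof -
        have e1: "q (Suc k) - q j = (q k - q j) + (q (Suc k) - q k)" using qmono[of j k] qmono[of k "Suc k"] jk by simp
        have e2: "(Suc k - j)*e = (k - j)*e + e" using jk by (simp add: Suc_diff_le)
        show ?thesis unfolding e1 e2 by simp
      qed
      ultimately show ?thesis by auto
    qed
  qed
  show "\<exists>c. hp HH dd x y c \<and> c \<le> dd x y + enat (16*Suc i*D^i)"
  proof (cases "\<exists>k<D. \<not> good k")
    case False
    then obtain c where c: "hp HH dd (s 0) (s D) c" "c \<le> enat (q D - q 0) + enat ((D - 0)*e)"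
      using chain[of 0 D] by auto
    have "enat (q D - q 0) + enat ((D - 0)*e) \<le> dd x y + enat (16*Suc i*D^i)"
      using qD q0 n De unfolding L_def by (simp add: add_mult_distrib)
    then show ?thesis using c s0 sD by (meson order_trans)
  next
    case True
    define B where "B = {k. k < D \<and> \<not> good k}"
    have Bfin: "finite B" "B \<noteq> {}" using True unfolding B_def by auto
    define k1 where "k1 = Min B"
    define k2 where "k2 = Max B"
    have k1B: "k1 \<in> B" and k2B: "k2 \<in> B" unfolding k1_def k2_def using Bfin by auto
    have k12: "k1 \<le> k2" unfolding k1_def k2_def using Bfin by simp
    have k2D: "k2 < D" using k2B unfolding B_def by simp
    have good1: "t < k1 \<Longrightarrow> good t" for t
      using Bfin Min_le[of B t] k2D k12 unfolding k1_def B_def by fastforce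
    have good2: "k2 < t \<Longrightarrow> t < D \<Longrightarrow> good t" for t
      using Bfin Max_ge[of B t] unfolding k2_def B_def by fastforce
    define a where "a = s k1"
    define b where "b = s (Suc k2)"
    have aV: "a \<in> V" and bV: "b \<in> V" unfolding a_def b_def using sV by auto
    have an: "setdist V E a (A (Suc i)) \<le> enat (4*L)" using bad k1B unfolding B_def a_def by blast
    have bn: "setdist V E b (A (Suc i)) \<le> enat (4*L)" using bad k2B unfolding B_def b_def by blast
    have il': "Suc i \<le> l" using il by simp
    define a' where "a' = p (Suc i) a"
    define b' where "b' = p (Suc i) b"
    have a'1: "A (Suc i) \<noteq> {}" "a' \<in> A (Suc i)" "dd a a' \<le> enat (4*L)"
      using pivot_near[OF aV il' an] unfolding a'_def by auto
    have b'1: "b' \<in> A (Suc i)" "dd b b' \<le> enat (4*L)"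
      using pivot_near[OF bV il' bn] unfolding b'_def by auto
    have a'V: "a' \<in> V" and b'V: "b' \<in> V" using a'1 b'1 A_sub[OF il'] by auto
    have eaa': "(a, a') \<in> HH" unfolding a'_def using pivot_edge[OF aV _ _ a'1(1)] il by simp
    have ebb': "(b, b') \<in> HH" unfolding b'_def using pivot_edge[OF bV _ _ a'1(1)] il by simp
    obtain c1 where c1: "hp HH dd x a c1" "c1 \<le> enat (q k1 - q 0) + enat ((k1 - 0)*e)"
      using chain[of 0 k1] good1 s0 unfolding a_def by auto
    obtain c3 where c3: "hp HH dd b y c3" "c3 \<le> enat (q D - q (Suc k2)) + enat ((D - Suc k2)*e)"
      using chain[of "Suc k2" D] good2 sD k2D unfolding b_def by auto
    have dxa: "dd x a \<le> enat (q k1)" using spos[of 0 k1] s0 q0 unfolding a_def by simp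
    have dab: "dd a b \<le> enat (q (Suc k2) - q k1)" using spos[of k1 "Suc k2"] k12 unfolding a_def b_def by simp
    have qk1: "q k1 \<le> q (Suc k2)" using qmono k12 by simp
    have "7 * L \<le> D * L" using D7 by (rule mult_le_mono1)
    then have nL: "n + 12 * L \<le> 4 * (D * L)" using n by linarith
    have a'nf: "a' \<notin> A (Suc (Suc i))"
    proof
      assume "a' \<in> A (Suc (Suc i))"
      then have "setdist V E x (A (Suc (Suc i))) \<le> dd x a'" by (rule setdist_le)
      also have "\<dots> \<le> dd x a + dd a a'" by (rule gdist_tri)
      also have "\<dots> \<le> enat (q k1) + enat (4*L)" using dxa a'1 by (intro add_mono)
      also have "\<dots> \<le> enat (4*(D*D^i))" using qn[of k1] nL unfolding L_def by simp
      finally show False using nf by simp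
    qed
    have da'b': "dd a' b' \<le> enat (4*L + (q (Suc k2) - q k1) + 4*L)"
    proof -
      have "dd a' b' \<le> dd a' a + dd a b'" by (rule gdist_tri)
      also have "\<dots> \<le> dd a' a + (dd a b + dd b b')" by (intro add_left_mono gdist_tri)
      also have "\<dots> \<le> enat (4*L) + (enat (q (Suc k2) - q k1) + enat (4*L))"
        using a'1 b'1 dab gdist_sym[OF sE, of V a' a] by (intro add_mono) auto
      finally show ?thesis by simp
    qed
    have lt: "dd a' b' < setdist V E a' (A (Suc (Suc i)))"
    proof (rule ccontr)
      assume nlt: "\<not> dd a' b' < setdist V E a' (A (Suc (Suc i)))"
      have "setdist V E a' (A (Suc (Suc i))) \<le> enat (4*L + (q (Suc k2) - q k1) + 4*L)"
        using nlt da'b' by auto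
      then obtain z where z: "z \<in> A (Suc (Suc i))" "dd a' z \<le> enat (4*L + (q (Suc k2) - q k1) + 4*L)"
        using pivot_near[OF a'V] il by (metis Suc_leI)
      have "setdist V E x (A (Suc (Suc i))) \<le> dd x z" using z(1) by (rule setdist_le)
      also have "\<dots> \<le> dd x a + dd a z" by (rule gdist_tri)
      also have "\<dots> \<le> dd x a + (dd a a' + dd a' z)" by (intro add_left_mono gdist_tri)
      also have "\<dots> \<le> enat (q k1) + (enat (4*L) + enat (4*L + (q (Suc k2) - q k1) + 4*L))"
        using dxa a'1 z by (intro add_mono) auto
      also have "\<dots> \<le> enat (4*(D*D^i))" using qk1 qn[of "Suc k2"] nL unfolding L_def by simp
      finally show False using nf by simp
    qed
    have ea'b': "(a', b') \<in> HH"
      using bunch_edge[of "Suc i" a' b'] il a'1 a'nf b'1 lt by simp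
    define S where "S = q k1 + k1*e + 4*L + (4*L + (q (Suc k2) - q k1) + 4*L) + 4*L + (n - q (Suc k2) + (D - Suc k2)*e)"
    have hpxy: "hp HH dd x y (c1 + dd a a' + dd a' b' + dd b' b + c3)"
    proof -
      have h2: "hp HH dd a a' (dd a a')" using eaa' hp_edge by blast
      have h3: "hp HH dd a' b' (dd a' b')" using ea'b' hp_edge by blast
      have h4: "hp HH dd b' b (dd b' b)" using ebb' hp_edge[of b' b] by blast
      show ?thesis using hp_trans[OF hp_trans[OF hp_trans[OF hp_trans[OF c1(1) h2] h3] h4] c3(1)] .
    qed
    have dbb: "dd b' b \<le> enat (4*L)" using b'1 gdist_sym[OF sE, of V b' b] by simp
    have "c1 + dd a a' + dd a' b' + dd b' b + c3 \<le>
       enat (q k1 + k1*e) + enat (4*L) + enat (4*L + (q (Suc k2) - q k1) + 4*L) + enat (4*L)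
        + enat (n - q (Suc k2) + (D - Suc k2)*e)"
    proof (intro add_mono)
      show "c1 \<le> enat (q k1 + k1*e)" using c1(2) q0 by simp
      show "c3 \<le> enat (n - q (Suc k2) + (D - Suc k2)*e)" using c3(2) qD by simp
    qed (use a'1 da'b' dbb in auto)
    also have "\<dots> = enat S" unfolding S_def by simp
    also have "S \<le> n + 16 * Suc i * D^i"
    proof -
      have "k1 + (D - Suc k2) \<le> D" using k12 k2D by simp
      then have "(k1 + (D - Suc k2))*e \<le> D*e" by (rule mult_le_mono1)
      then have "k1*e + (D - Suc k2)*e \<le> D*e" by (simp add: add_mult_distrib)
      then show ?thesis using De qk1 qn[of "Suc k2"] unfolding L_def S_def by (simp add: algebra_simps)
    qed
    then have "enat S \<le> dd x y + enat (16 * Suc i * D^i)" using n by simp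
    finally show ?thesis using hpxy by blast
  qed
qed

lemma main: "i < l \<Longrightarrow> x \<in> V \<Longrightarrow> y \<in> V \<Longrightarrow> dd x y \<le> enat (D^i) \<Longrightarrow>
  (\<exists>c. hp HH dd x y c \<and> c \<le> dd x y + enat (16*i*D^(i-1))) \<or> setdist V E x (A (Suc i)) \<le> enat (4*D^i)"
proof (induction i arbitrary: x y)
  case 0
  then have "(\<exists>c. hp HH dd x y c \<and> c \<le> dd x y) \<or> setdist V E x (A 1) \<le> enat 4"
    by (intro base) auto
  then show ?case by (simp add: zero_enat_def[symmetric])
next
  case (Suc i)
  have "(\<exists>c. hp HH dd x y c \<and> c \<le> dd x y + enat (16*Suc i*D^i)) \<or> setdist V E x (A (Suc (Suc i))) \<le> enat (4*(D*D^i))"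
    by (rule step) (use Suc in auto)
  then show ?case by (simp add: mult.assoc)
qed

end

theorem lemma3p1:
  shows "\<exists>c c' :: real. c > 0 \<and> c' > 0 \<and>
    (\<forall>(V :: nat set) (E :: (nat \<times> nat) set) (l :: nat) (A :: nat \<Rightarrow> nat set)
       (p :: nat \<Rightarrow> nat \<Rightarrow> nat) (\<epsilon> :: real).
      finite V \<and> E \<subseteq> V \<times> V \<and> sym E \<and> l \<ge> 1 \<and>
      A 0 = V \<and> (\<forall>j<l. A (Suc j) \<subseteq> A j) \<and> A l = {} \<and>
      is_pivot V E A l p \<and>
      0 < \<epsilon> \<and> \<epsilon> < 1/6 \<and> (\<exists>k::nat. 1/\<epsilon> = real k)
      \<longrightarrow>
      (\<forall>i<l. \<forall>x\<in>V. \<forall>y\<in>V.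
         ereal_of_enat (gdist V E x y) \<le> ereal ((1/\<epsilon>) ^ i) \<longrightarrow>
         (ereal_of_enat (wdist (TZ_edges V E A l p) (gdist V E) x y)
             \<le> ereal_of_enat (gdist V E x y) + ereal (c * real i * (1/\<epsilon>) ^ (i - 1))
          \<or> ereal_of_enat (setdist V E x (A (Suc i))) \<le> ereal (c' * (1/\<epsilon>) ^ i))))"
proof (rule exI[of _ 16], rule exI[of _ 4], intro conjI allI impI ballI)
  fix V :: "nat set" and E l A p and \<epsilon> :: real and i x y
  assume H: "finite V \<and> E \<subseteq> V \<times> V \<and> sym E \<and> l \<ge> 1 \<and>
      A 0 = V \<and> (\<forall>j<l. A (Suc j) \<subseteq> A j) \<and> A l = {} \<and>
      is_pivot V E A l p \<and>
      0 < \<epsilon> \<and> \<epsilon> < 1/6 \<and> (\<exists>k::nat. 1/\<epsilon> = real k)"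
    and il: "i < l" and xV: "x \<in> V" and yV: "y \<in> V"
    and dxy: "ereal_of_enat (gdist V E x y) \<le> ereal ((1/\<epsilon>) ^ i)"
  obtain k :: nat where k: "1/\<epsilon> = real k" using H by blast
  have "real k > 6"
  proof -
    have "0 < \<epsilon>" "\<epsilon> < 1/6" using H by auto
    then have "1/\<epsilon> > 6" by (simp add: field_simps)
    then show ?thesis using k by simp
  qed
  then have k7: "k \<ge> 7" by simp
  have pw: "(1/\<epsilon>)^j = real (k^j)" for j using k by simp
  have d: "gdist V E x y \<le> enat (k^i)"
  proof -
    have e: "ereal_of_enat (enat (k^i)) = ereal (real (k^i))" by (rule ereal_of_enat_simps(1))
    have "ereal_of_enat (gdist V E x y) \<le> ereal_of_enat (enat (k^i))" using dxy unfolding pw e[symmetric] .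
    then show ?thesis by (simp only: ereal_of_enat_le_iff)
  qed
  have "(\<exists>c. hp (TZ_edges V E A l p) (gdist V E) x y c \<and> c \<le> gdist V E x y + enat (16*i*k^(i-1)))
     \<or> setdist V E x (A (Suc i)) \<le> enat (4*k^i)"
    using main[of E V A l p k i x y] H il xV yV d k7 by blast
  then show "ereal_of_enat (wdist (TZ_edges V E A l p) (gdist V E) x y)
             \<le> ereal_of_enat (gdist V E x y) + ereal (16 * real i * (1/\<epsilon>) ^ (i - 1))
          \<or> ereal_of_enat (setdist V E x (A (Suc i))) \<le> ereal (4 * (1/\<epsilon>) ^ i)"
  proof
    assume "\<exists>c. hp (TZ_edges V E A l p) (gdist V E) x y c \<and> c \<le> gdist V E x y + enat (16*i*k^(i-1))"
    then obtain c where c: "hp (TZ_edges V E A l p) (gdist V E) x y c" "c \<le> gdist V E x y + enat (16*i*k^(i-1))" by blast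
    have "wdist (TZ_edges V E A l p) (gdist V E) x y \<le> gdist V E x y + enat (16*i*k^(i-1))"
      using hp_wdist[OF c(1)] c(2) by (rule order_trans)
    then have "ereal_of_enat (wdist (TZ_edges V E A l p) (gdist V E) x y) \<le> ereal_of_enat (gdist V E x y + enat (16*i*k^(i-1)))"
      by simp
    also have "\<dots> = ereal_of_enat (gdist V E x y) + ereal (16 * real i * (1/\<epsilon>) ^ (i - 1))"
      unfolding ereal_of_enat_add pw by simp
    finally show ?thesis by blast
  next
    assume "setdist V E x (A (Suc i)) \<le> enat (4*k^i)"
    then have "ereal_of_enat (setdist V E x (A (Suc i))) \<le> ereal_of_enat (enat (4*k^i))" by (simp only: ereal_of_enat_le_iff)
    also have "\<dots> = ereal (4 * (1/\<epsilon>) ^ i)" unfolding pw by simp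
    finally show ?thesis by blast
  qed
qed simp_all

end
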